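(* Let $\Gamma$ be a metrized graph with $v$ vertices. If $v=2$ then $Kf(\Gamma)=y(\Gamma)$; if $v=3$ then $Kf(\Gamma)=2y(\Gamma)$.
   Context: A metrized graph $\Gamma$ is a finite connected graph (multiple edges and self-loops allowed) each of whose edges is identified with a closed segment of positive length, with a finite nonempty vertex set $V(\Gamma)$ containing every point of valence $\neq2$; $v=\#V(\Gamma)$, $L_i$ the length of $e_i$, $r$ the effective resistance (edges as resistors of resistance equal to length). $Kf(\Gamma)=\frac12\sum_{p,q\in V(\Gamma)}r(p,q)$. For an edge $e_i$ with end points $p_i,q_i$: if $\Gamma-e_i$ (interior deleted) is connected, $R_i$ is the effective resistance between $p_i,q_i$ in $\Gamma-e_i$, $R_{a_i,p}=\hat j_{p_i}(p,q_i)$, $R_{b_i,p}=\hat j_{q_i}(p,p_i)$ with $\hat j_z(x,y)$ the voltage function of $\Gamma-e_i$ (potential at $x$ when unit current enters at $y$ and exits at $z$, potential $0$ at $z$); if $e_i$ is a bridge, $R_{a_i,p}=0,R_{b_i,p}=R_i$ for $p$ in the component of $\Gamma-e_i$ containing $p_i$ and $R_{a_i,p}=R_i,R_{b_i,p}=0$ otherwise, with every expression in $R_i$ interpreted as its limit as $R_i\to\infty$; for a self-loop $R_i=0$. For a fixed vertex $p$ (independent of choice), $y(\Gamma)=\frac14\sum_{e_i}\frac{L_iR_i^2}{(L_i+R_i)^2}+\frac34\sum_{e_i}\frac{L_i(R_{a_i,p}-R_{b_i,p})^2}{(L_i+R_i)^2}$. *)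

theory Defs
  imports Complex_Main
begin

text \<open>A metrized graph is modelled by its combinatorial model: a finite nonempty vertex
set V, a finite set E of edge labels, endpoint map ends (first endpoint p_e, second q_e;
multiple edges and self-loops allowed) and positive lengths L.  Interior points of edges
have valence 2, so V contains every point of valence other than 2.\<close>

definition adj_rel :: "'e set \<Rightarrow> ('e \<Rightarrow> 'v \<times> 'v) \<Rightarrow> ('v \<times> 'v) set" where
  "adj_rel E ends = {(x, y). \<exists>e\<in>E. ends e = (x, y) \<or> ends e = (y, x)}"

definition graph_connected :: "'v set \<Rightarrow> 'e set \<Rightarrow> ('e \<Rightarrow> 'v \<times> 'v) \<Rightarrow> bool" where
  "graph_connected V E ends \<longleftrightarrow> (\<forall>x\<in>V. \<forall>y\<in>V. (x, y) \<in> (adj_rel E ends)\<^sup>*)"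

definition metrized_graph ::
  "'v set \<Rightarrow> 'e set \<Rightarrow> ('e \<Rightarrow> 'v \<times> 'v) \<Rightarrow> ('e \<Rightarrow> real) \<Rightarrow> bool" where
  "metrized_graph V E ends L \<longleftrightarrow>
     finite V \<and> V \<noteq> {} \<and> finite E \<and>
     (\<forall>e\<in>E. fst (ends e) \<in> V \<and> snd (ends e) \<in> V \<and> L e > 0) \<and>
     graph_connected V E ends"

text \<open>Current flowing out of vertex x through edge e under potential phi
(edge e is a resistor of resistance L e).\<close>
definition edge_outflow ::
  "('e \<Rightarrow> 'v \<times> 'v) \<Rightarrow> ('e \<Rightarrow> real) \<Rightarrow> ('v \<Rightarrow> real) \<Rightarrow> 'e \<Rightarrow> 'v \<Rightarrow> real" where
  "edge_outflow ends L phi e x =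
     (if fst (ends e) = x then (phi x - phi (snd (ends e))) / L e else 0) +
     (if snd (ends e) = x then (phi x - phi (fst (ends e))) / L e else 0)"

text \<open>phi is a potential for unit current entering at a and exiting at b (Kirchhoff/Ohm).\<close>
definition is_potential ::
  "'v set \<Rightarrow> 'e set \<Rightarrow> ('e \<Rightarrow> 'v \<times> 'v) \<Rightarrow> ('e \<Rightarrow> real) \<Rightarrow> 'v \<Rightarrow> 'v \<Rightarrow> ('v \<Rightarrow> real) \<Rightarrow> bool" where
  "is_potential V E ends L a b phi \<longleftrightarrow>
     (\<forall>x\<in>V. (\<Sum>e\<in>E. edge_outflow ends L phi e x) =
             (if x = a then 1 else 0) - (if x = b then 1 else 0))"

text \<open>Voltage function j_z(x,y): potential at x when unit current enters at y and exits
at z, with potential 0 at z (normalised to 0 off V to make it unique).\<close>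
definition volt ::
  "'v set \<Rightarrow> 'e set \<Rightarrow> ('e \<Rightarrow> 'v \<times> 'v) \<Rightarrow> ('e \<Rightarrow> real) \<Rightarrow> 'v \<Rightarrow> 'v \<Rightarrow> 'v \<Rightarrow> real" where
  "volt V E ends L z x y =
     (THE phi. is_potential V E ends L y z phi \<and> phi z = 0 \<and> (\<forall>u. u \<notin> V \<longrightarrow> phi u = 0)) x"

definition eff_res ::
  "'v set \<Rightarrow> 'e set \<Rightarrow> ('e \<Rightarrow> 'v \<times> 'v) \<Rightarrow> ('e \<Rightarrow> real) \<Rightarrow> 'v \<Rightarrow> 'v \<Rightarrow> real" where
  "eff_res V E ends L x y = volt V E ends L y x x"

definition kirchhoff_index ::
  "'v set \<Rightarrow> 'e set \<Rightarrow> ('e \<Rightarrow> 'v \<times> 'v) \<Rightarrow> ('e \<Rightarrow> real) \<Rightarrow> real" where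
  "kirchhoff_index V E ends L = (1/2) * (\<Sum>p\<in>V. \<Sum>q\<in>V. eff_res V E ends L p q)"

text \<open>Quantities attached to edge e (Gamma - e has the same vertices and edges E - {e}).\<close>
definition is_bridge :: "'v set \<Rightarrow> 'e set \<Rightarrow> ('e \<Rightarrow> 'v \<times> 'v) \<Rightarrow> 'e \<Rightarrow> bool" where
  "is_bridge V E ends e \<longleftrightarrow> \<not> graph_connected V (E - {e}) ends"

definition R_edge :: "'v set \<Rightarrow> 'e set \<Rightarrow> ('e \<Rightarrow> 'v \<times> 'v) \<Rightarrow> ('e \<Rightarrow> real) \<Rightarrow> 'e \<Rightarrow> real" where
  "R_edge V E ends L e = eff_res V (E - {e}) ends L (fst (ends e)) (snd (ends e))"

definition R_a :: "'v set \<Rightarrow> 'e set \<Rightarrow> ('e \<Rightarrow> 'v \<times> 'v) \<Rightarrow> ('e \<Rightarrow> real) \<Rightarrow> 'e \<Rightarrow> 'v \<Rightarrow> real" where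
  "R_a V E ends L e p = volt V (E - {e}) ends L (fst (ends e)) p (snd (ends e))"

definition R_b :: "'v set \<Rightarrow> 'e set \<Rightarrow> ('e \<Rightarrow> 'v \<times> 'v) \<Rightarrow> ('e \<Rightarrow> real) \<Rightarrow> 'e \<Rightarrow> 'v \<Rightarrow> real" where
  "R_b V E ends L e p = volt V (E - {e}) ends L (snd (ends e)) p (fst (ends e))"

text \<open>Bridge case: R_i is treated as a parameter t and the limit t \<rightarrow> \<infinity> is taken; for p in
the component of Gamma - e containing p_e, R_a = 0 and R_b = t, otherwise R_a = t, R_b = 0.\<close>
definition same_side :: "'e set \<Rightarrow> ('e \<Rightarrow> 'v \<times> 'v) \<Rightarrow> 'e \<Rightarrow> 'v \<Rightarrow> bool" where
  "same_side E ends e p \<longleftrightarrow> (fst (ends e), p) \<in> (adj_rel (E - {e}) ends)\<^sup>*"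

definition y_term1 :: "'v set \<Rightarrow> 'e set \<Rightarrow> ('e \<Rightarrow> 'v \<times> 'v) \<Rightarrow> ('e \<Rightarrow> real) \<Rightarrow> 'e \<Rightarrow> real" where
  "y_term1 V E ends L e =
     (if is_bridge V E ends e
      then Lim at_top (\<lambda>t::real. L e * t\<^sup>2 / (L e + t)\<^sup>2)
      else (let R = R_edge V E ends L e in L e * R\<^sup>2 / (L e + R)\<^sup>2))"

definition y_term2 :: "'v set \<Rightarrow> 'e set \<Rightarrow> ('e \<Rightarrow> 'v \<times> 'v) \<Rightarrow> ('e \<Rightarrow> real) \<Rightarrow> 'e \<Rightarrow> 'v \<Rightarrow> real" where
  "y_term2 V E ends L e p =
     (if is_bridge V E ends e
      then Lim at_top (\<lambda>t::real.
             let ra = (if same_side E ends e p then 0 else t);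
                 rb = (if same_side E ends e p then t else 0)
             in L e * (ra - rb)\<^sup>2 / (L e + t)\<^sup>2)
      else (let R = R_edge V E ends L e in
            L e * (R_a V E ends L e p - R_b V E ends L e p)\<^sup>2 / (L e + R)\<^sup>2))"

definition y_inv :: "'v set \<Rightarrow> 'e set \<Rightarrow> ('e \<Rightarrow> 'v \<times> 'v) \<Rightarrow> ('e \<Rightarrow> real) \<Rightarrow> 'v \<Rightarrow> real" where
  "y_inv V E ends L p =
     (1/4) * (\<Sum>e\<in>E. y_term1 V E ends L e) + (3/4) * (\<Sum>e\<in>E. y_term2 V E ends L e p)"

end

theory Submission
  imports Defs
begin


definition cnd :: "'e set \<Rightarrow> ('e \<Rightarrow> 'v \<times> 'v) \<Rightarrow> ('e \<Rightarrow> real) \<Rightarrow> 'v \<Rightarrow> 'v \<Rightarrow> real" where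
  "cnd E ends L x y = (\<Sum>e\<in>{e\<in>E. ends e = (x,y) \<or> ends e = (y,x)}. 1 / L e)"

lemma cnd_sym: "cnd E ends L x y = cnd E ends L y x"
  unfolding cnd_def by (rule sum.cong) auto

lemma cnd_nonneg: "\<forall>e\<in>E. L e > 0 \<Longrightarrow> cnd E ends L x y \<ge> 0"
  unfolding cnd_def by (rule sum_nonneg) auto

lemma cnd_pos: "finite E \<Longrightarrow> \<forall>e\<in>E. L e > 0 \<Longrightarrow> e \<in> E \<Longrightarrow> ends e = (x,y) \<or> ends e = (y,x)
   \<Longrightarrow> cnd E ends L x y > 0"
  unfolding cnd_def
  by (rule sum_pos2[where i=e]) auto

lemma cnd_pos_adj: "cnd E ends L x y \<noteq> 0 \<Longrightarrow> (x,y) \<in> adj_rel E ends"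
proof -
  assume "cnd E ends L x y \<noteq> 0"
  then have "{e\<in>E. ends e = (x,y) \<or> ends e = (y,x)} \<noteq> {}" unfolding cnd_def by force
  then show ?thesis unfolding adj_rel_def by auto
qed

lemma cnd_remove: "finite E \<Longrightarrow> e \<in> E \<Longrightarrow>
  cnd (E - {e}) ends L u w = cnd E ends L u w - (if ends e = (u,w) \<or> ends e = (w,u) then 1 / L e else 0)"
proof -
  assume f: "finite E" and e: "e \<in> E"
  have "{e'\<in>E - {e}. ends e' = (u,w) \<or> ends e' = (w,u)} = {e'\<in>E. ends e' = (u,w) \<or> ends e' = (w,u)} - {e}" by auto
  then show ?thesis unfolding cnd_def using f e by (simp add: sum_diff1)
qed

lemma outflow_edge:
  assumes "fst (ends e) \<in> V" "snd (ends e) \<in> V" "finite V"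
  shows "edge_outflow ends L phi e x = (\<Sum>y\<in>V-{x}. (if ends e = (x,y) \<or> ends e = (y,x) then (phi x - phi y)/L e else 0))"
proof -
  obtain u w where uw: "ends e = (u,w)" by (cases "ends e")
  show ?thesis
  proof (cases "u = x")
    case True
    then show ?thesis using assms uw
      by (cases "w = x") (auto simp: edge_outflow_def sum.delta if_distrib cong: if_cong)
  next
    case False
    then show ?thesis using assms uw
      by (cases "w = x") (auto simp: edge_outflow_def sum.delta if_distrib cong: if_cong)
  qed
qed

lemma outflow_sum:
  assumes "finite V" "finite E" "\<forall>e\<in>E. fst (ends e) \<in> V \<and> snd (ends e) \<in> V"
  shows "(\<Sum>e\<in>E. edge_outflow ends L phi e x) = (\<Sum>y\<in>V-{x}. cnd E ends L x y * (phi x - phi y))"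
proof -
  have "(\<Sum>e\<in>E. edge_outflow ends L phi e x) =
     (\<Sum>e\<in>E. \<Sum>y\<in>V-{x}. (if ends e = (x,y) \<or> ends e = (y,x) then (phi x - phi y)/L e else 0))"
    using assms by (intro sum.cong refl outflow_edge) auto
  also have "\<dots> = (\<Sum>y\<in>V-{x}. \<Sum>e\<in>E. (if ends e = (x,y) \<or> ends e = (y,x) then (phi x - phi y)/L e else 0))"
    by (rule sum.swap)
  also have "\<dots> = (\<Sum>y\<in>V-{x}. cnd E ends L x y * (phi x - phi y))"
  proof (rule sum.cong[OF refl])
    fix y
    have "(\<Sum>e\<in>E. (if ends e = (x,y) \<or> ends e = (y,x) then (phi x - phi y)/L e else 0))
       = (\<Sum>e\<in>{e\<in>E. ends e = (x,y) \<or> ends e = (y,x)}. (phi x - phi y)/L e)"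
      using assms(2) by (simp add: sum.inter_filter)
    also have "\<dots> = cnd E ends L x y * (phi x - phi y)"
      unfolding cnd_def sum_distrib_right by (rule sum.cong) auto
    finally show "(\<Sum>e\<in>E. (if ends e = (x,y) \<or> ends e = (y,x) then (phi x - phi y)/L e else 0)) = cnd E ends L x y * (phi x - phi y)" .
  qed
  finally show ?thesis .
qed

lemma energy_edge:
  assumes "fst (ends e) \<in> V" "snd (ends e) \<in> V" "finite V"
  shows "(\<Sum>x\<in>V. d x * edge_outflow ends L d e x) = (d (fst (ends e)) - d (snd (ends e)))^2 / L e"
proof -
  obtain u w where uw: "ends e = (u,w)" by (cases "ends e")
  have "(\<Sum>x\<in>V. d x * edge_outflow ends L d e x) =
     (\<Sum>x\<in>V. (if u = x then d x * ((d x - d w) / L e) else 0) + (if w = x then d x * ((d x - d u) / L e) else 0))"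
    by (rule sum.cong) (auto simp: edge_outflow_def uw ring_distribs)
  also have "\<dots> = (\<Sum>x\<in>V. (if u = x then d x * ((d x - d w) / L e) else 0)) + (\<Sum>x\<in>V. (if w = x then d x * ((d x - d u) / L e) else 0))"
    by (rule sum.distrib)
  also have "\<dots> = d u * ((d u - d w) / L e) + d w * ((d w - d u) / L e)"
    using assms uw by (simp add: sum.delta)
  also have "\<dots> = (d u - d w)^2 / L e" by (simp add: power2_eq_square add_divide_distrib[symmetric] algebra_simps)
  finally show ?thesis using uw by simp
qed

lemma outflow_diff:
  "edge_outflow ends L (\<lambda>u. phi u - psi u) e x = edge_outflow ends L phi e x - edge_outflow ends L psi e x"
  by (auto simp: edge_outflow_def diff_divide_distrib add_divide_distrib)

lemma pot_unique:
  assumes mg: "metrized_graph V E ends L"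
    and P1: "is_potential V E ends L a b phi" and P2: "is_potential V E ends L a b psi"
    and z: "z \<in> V" "phi z = psi z" and x: "x \<in> V"
  shows "phi x = psi x"
proof -
  define d where "d = (\<lambda>u. phi u - psi u)"
  have fV: "finite V" and fE: "finite E" and eV: "\<forall>e\<in>E. fst (ends e) \<in> V \<and> snd (ends e) \<in> V \<and> L e > 0"
    and con: "graph_connected V E ends" using mg unfolding metrized_graph_def by auto
  have h0: "(\<Sum>e\<in>E. edge_outflow ends L d e x) = 0" if "x \<in> V" for x
  proof -
    have "(\<Sum>e\<in>E. edge_outflow ends L d e x) = (\<Sum>e\<in>E. edge_outflow ends L phi e x) - (\<Sum>e\<in>E. edge_outflow ends L psi e x)"
      unfolding d_def outflow_diff by (simp add: sum_subtractf)
    then show ?thesis using P1 P2 that unfolding is_potential_def by simp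
  qed
  have "(\<Sum>e\<in>E. (d (fst (ends e)) - d (snd (ends e)))^2 / L e) = (\<Sum>e\<in>E. \<Sum>x\<in>V. d x * edge_outflow ends L d e x)"
    using eV fV by (intro sum.cong refl energy_edge[symmetric]) auto
  also have "\<dots> = (\<Sum>x\<in>V. d x * (\<Sum>e\<in>E. edge_outflow ends L d e x))"
    by (subst sum.swap) (simp add: sum_distrib_left)
  also have "\<dots> = 0" using h0 by simp
  finally have S: "(\<Sum>e\<in>E. (d (fst (ends e)) - d (snd (ends e)))^2 / L e) = 0" .
  have "\<forall>e\<in>E. (d (fst (ends e)) - d (snd (ends e)))^2 / L e = 0"
    using S fE eV by (subst sum_nonneg_eq_0_iff[symmetric]) (auto intro!: divide_nonneg_pos)
  then have edq: "d (fst (ends e)) = d (snd (ends e))" if "e \<in> E" for e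
  proof -
    have "L e > 0" using that eV by auto
    then show ?thesis using that \<open>\<forall>e\<in>E. _ = 0\<close> by force
  qed
  have adj: "d u = d w" if "(u,w) \<in> adj_rel E ends" for u w
    using that edq unfolding adj_rel_def by (auto; metis fst_conv snd_conv)
  have "(z,x) \<in> (adj_rel E ends)\<^sup>*" using con z x unfolding graph_connected_def by auto
  then have "d x = d z"
    by (induction rule: rtrancl_induct) (auto dest: adj)
  then show ?thesis using z unfolding d_def by simp
qed

lemma volt_eq:
  assumes mg: "metrized_graph V E ends L" and P: "is_potential V E ends L y z phi"
    and "phi z = 0" "\<forall>u. u \<notin> V \<longrightarrow> phi u = 0" "z \<in> V"
  shows "volt V E ends L z x y = phi x"
proof -
  have "(THE phi. is_potential V E ends L y z phi \<and> phi z = 0 \<and> (\<forall>u. u \<notin> V \<longrightarrow> phi u = 0)) = phi"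
  proof (rule the_equality)
    show "is_potential V E ends L y z phi \<and> phi z = 0 \<and> (\<forall>u. u \<notin> V \<longrightarrow> phi u = 0)" using assms by auto
  next
    fix psi assume A: "is_potential V E ends L y z psi \<and> psi z = 0 \<and> (\<forall>u. u \<notin> V \<longrightarrow> psi u = 0)"
    show "psi = phi"
    proof
      fix u show "psi u = phi u"
        using pot_unique[OF mg _ P, of psi z u] A assms by (cases "u \<in> V") auto
    qed
  qed
  then show ?thesis unfolding volt_def by simp
qed

lemma volt_same:
  assumes mg: "metrized_graph V E ends L" "z \<in> V"
  shows "volt V E ends L z x z = 0"
proof -
  have Z: "edge_outflow ends L (\<lambda>_. 0::real) e u = 0" for e u
    unfolding edge_outflow_def by simp
  have P: "is_potential V E ends L z z (\<lambda>_. 0::real)"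
    unfolding is_potential_def Z by simp
  have "volt V E ends L z x z = (\<lambda>_. 0::real) x"
    by (rule volt_eq[OF mg(1) P]) (use assms in auto)
  then show ?thesis by simp
qed

lemma adj_sym: "(x,y) \<in> adj_rel E ends \<Longrightarrow> (y,x) \<in> adj_rel E ends"
  unfolding adj_rel_def by auto

lemma iso:
  assumes mg: "metrized_graph V E ends L" and x: "x \<in> V"
    and Z: "\<forall>y\<in>V. y \<noteq> x \<longrightarrow> cnd E ends L x y = 0"
  shows "V = {x}"
proof -
  have fE: "finite E" and eV: "\<forall>e\<in>E. fst (ends e) \<in> V \<and> snd (ends e) \<in> V \<and> L e > 0"
    and con: "graph_connected V E ends" using mg unfolding metrized_graph_def by auto
  have Lp: "\<forall>e\<in>E. L e > 0" using eV by auto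
  have "y = x" if "y \<in> V" for y
  proof -
    have "(x,y) \<in> (adj_rel E ends)\<^sup>*" using con x that unfolding graph_connected_def by auto
    then show ?thesis
    proof (induction rule: rtrancl_induct)
      case base then show ?case by simp
    next
      case (step u w)
      then obtain e where e: "e \<in> E" "ends e = (x,w) \<or> ends e = (w,x)"
        unfolding adj_rel_def by auto
      have "w \<in> V" using e eV by (metis fst_conv snd_conv)
      show ?case
      proof (rule ccontr)
        assume "w \<noteq> x"
        then have "cnd E ends L x w = 0" using Z \<open>w \<in> V\<close> by auto
        moreover have "cnd E ends L x w > 0" by (rule cnd_pos[OF fE Lp e(1)]) (rule e(2))
        ultimately show False by simp
      qed
    qed
  qed
  then show ?thesis using x by blast
qed

lemma conn3:
  assumes "V = {a,b,c}" "(a,b) \<in> adj_rel E ends" "(a,c) \<in> adj_rel E ends"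
  shows "graph_connected V E ends"
proof -
  let ?R = "adj_rel E ends"
  have ba: "(b,a) \<in> ?R" using assms(2) by (rule adj_sym)
  have ca: "(c,a) \<in> ?R" using assms(3) by (rule adj_sym)
  have "(x,y) \<in> ?R\<^sup>*" if "x \<in> V" "y \<in> V" for x y
    using that assms ba ca
    by (auto intro: r_into_rtrancl rtrancl_trans[OF r_into_rtrancl r_into_rtrancl])
  then show ?thesis unfolding graph_connected_def by auto
qed

lemma conn2:
  assumes "V = {a,b}" "(a,b) \<in> adj_rel E ends"
  shows "graph_connected V E ends"
proof -
  let ?R = "adj_rel E ends"
  have ba: "(b,a) \<in> ?R" using assms(2) by (rule adj_sym)
  have "(x,y) \<in> ?R\<^sup>*" if "x \<in> V" "y \<in> V" for x y
    using that assms ba by (auto intro: r_into_rtrancl)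
  then show ?thesis unfolding graph_connected_def by auto
qed

lemma mg_remove: "metrized_graph V E ends L \<Longrightarrow> graph_connected V (E - {e}) ends \<Longrightarrow> metrized_graph V (E - {e}) ends L"
  unfolding metrized_graph_def by auto

lemma loop_conn:
  assumes mg: "metrized_graph V E ends L" and e: "e \<in> E" "fst (ends e) = snd (ends e)"
  shows "graph_connected V (E - {e}) ends"
proof -
  have "adj_rel E ends \<subseteq> (adj_rel (E - {e}) ends)\<^sup>*"
  proof
    fix uw assume "uw \<in> adj_rel E ends"
    then obtain u w e' where uw: "uw = (u,w)" "e' \<in> E" "ends e' = (u,w) \<or> ends e' = (w,u)"
      unfolding adj_rel_def by auto
    show "uw \<in> (adj_rel (E - {e}) ends)\<^sup>*"
    proof (cases "e' = e")
      case True then have "u = w" using uw e by auto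
      then show ?thesis using uw by simp
    next
      case False then have "(u,w) \<in> adj_rel (E - {e}) ends" using uw unfolding adj_rel_def by auto
      then show ?thesis using uw by auto
    qed
  qed
  then have "(adj_rel E ends)\<^sup>* \<subseteq> (adj_rel (E - {e}) ends)\<^sup>*"
    using rtrancl_subset_rtrancl by blast
  then show ?thesis using mg unfolding metrized_graph_def graph_connected_def by blast
qed

lemma sig3_pos:
  assumes mg: "metrized_graph V E ends L" and V: "V = {a,b,c}" "a \<noteq> b" "a \<noteq> c" "b \<noteq> c"
  shows "cnd E ends L a b * cnd E ends L a c + cnd E ends L a b * cnd E ends L b c + cnd E ends L a c * cnd E ends L b c > 0"
proof -
  have Lp: "\<forall>e\<in>E. L e > 0" using mg unfolding metrized_graph_def by auto
  define x where "x = cnd E ends L a b"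
  define y where "y = cnd E ends L a c"
  define z where "z = cnd E ends L b c"
  have nn: "x \<ge> 0" "y \<ge> 0" "z \<ge> 0" unfolding x_def y_def z_def by (simp_all add: cnd_nonneg[OF Lp])
  have sym: "cnd E ends L b a = x" "cnd E ends L c a = y" "cnd E ends L c b = z"
    unfolding x_def y_def z_def by (auto simp: cnd_sym)
  have a: "\<not> (x = 0 \<and> y = 0)"
  proof
    assume "x = 0 \<and> y = 0"
    then have "V = {a}" using V by (intro iso[OF mg]) (auto simp: x_def[symmetric] y_def[symmetric] z_def[symmetric])
    then show False using V by auto
  qed
  have b: "\<not> (x = 0 \<and> z = 0)"
  proof
    assume "x = 0 \<and> z = 0"
    then have "V = {b}" using V sym by (intro iso[OF mg]) (auto simp: x_def[symmetric] y_def[symmetric] z_def[symmetric])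
    then show False using V by auto
  qed
  have c: "\<not> (y = 0 \<and> z = 0)"
  proof
    assume "y = 0 \<and> z = 0"
    then have "V = {c}" using V sym by (intro iso[OF mg]) (auto simp: x_def[symmetric] y_def[symmetric] z_def[symmetric])
    then show False using V by auto
  qed
  have "x * y + x * z + y * z > 0"
  proof (cases "x = 0")
    case True then show ?thesis using a b nn by (simp add: mult_pos_pos)
  next
    case False then have "x > 0" using nn by simp
    then show ?thesis using a b c nn
      by (smt (verit) mult_nonneg_nonneg mult_pos_pos)
  qed
  then show ?thesis unfolding x_def y_def z_def .
qed

lemma g2_pos:
  assumes mg: "metrized_graph V E ends L" and V: "V = {a,b}" "a \<noteq> b"
  shows "cnd E ends L a b > 0"
proof -
  have Lp: "\<forall>e\<in>E. L e > 0" using mg unfolding metrized_graph_def by auto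
  have "cnd E ends L a b \<noteq> 0"
  proof
    assume "cnd E ends L a b = 0"
    then have "V = {a}" using V by (intro iso[OF mg]) auto
    then show False using V by auto
  qed
  then show ?thesis using cnd_nonneg[OF Lp, of ends a b] by simp
qed

lemma volt3:
  assumes mg: "metrized_graph V E ends L" and V: "V = {a,b,c}" "a \<noteq> b" "a \<noteq> c" "b \<noteq> c"
  shows "volt V E ends L b x a =
    (let gab = cnd E ends L a b; gac = cnd E ends L a c; gbc = cnd E ends L b c;
         s = gab * gac + gab * gbc + gac * gbc in
     if x = a then (gac + gbc) / s else if x = c then gac / s else 0)"
proof -
  define gab where "gab = cnd E ends L a b"
  define gac where "gac = cnd E ends L a c"
  define gbc where "gbc = cnd E ends L b c"
  define s where "s = gab * gac + gab * gbc + gac * gbc"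
  have sp: "s > 0" unfolding s_def gab_def gac_def gbc_def by (rule sig3_pos[OF mg V])
  have sym: "cnd E ends L b a = gab" "cnd E ends L c a = gac" "cnd E ends L c b = gbc"
    "cnd E ends L a b = gab" "cnd E ends L a c = gac" "cnd E ends L b c = gbc"
    unfolding gab_def gac_def gbc_def by (auto simp: cnd_sym)
  define phi where "phi = (\<lambda>x. if x = a then (gac + gbc) / s else if x = c then gac / s else 0)"
  have fV: "finite V" and fE: "finite E" and eV: "\<forall>e\<in>E. fst (ends e) \<in> V \<and> snd (ends e) \<in> V"
    using mg unfolding metrized_graph_def by auto
  have P: "is_potential V E ends L a b phi"
    unfolding is_potential_def
  proof
    fix x assume x: "x \<in> V"
    have "(\<Sum>e\<in>E. edge_outflow ends L phi e x) = (\<Sum>y\<in>V-{x}. cnd E ends L x y * (phi x - phi y))"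
      by (rule outflow_sum[OF fV fE eV])
    also have "\<dots> = (if x = a then 1 else 0) - (if x = b then 1 else 0)"
    proof -
      consider "x = a" | "x = b" | "x = c" using x V by auto
      then show ?thesis
      proof cases
        case 1
        then have "V - {x} = {b,c}" using V by auto
        then show ?thesis using 1 V sp
          by (simp add: sym phi_def field_simps; simp add: s_def algebra_simps)
      next
        case 2
        then have "V - {x} = {a,c}" using V by auto
        then show ?thesis using 2 V sp
          by (simp add: sym phi_def field_simps; simp add: s_def algebra_simps)
      next
        case 3
        then have "V - {x} = {a,b}" using V by auto
        then show ?thesis using 3 V sp
          by (simp add: sym phi_def field_simps; simp add: s_def algebra_simps)
      qed
    qed
    finally show "(\<Sum>e\<in>E. edge_outflow ends L phi e x) = (if x = a then 1 else 0) - (if x = b then 1 else 0)" .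
  qed
  have "volt V E ends L b x a = phi x"
    by (rule volt_eq[OF mg P]) (use V in \<open>auto simp: phi_def\<close>)
  then show ?thesis unfolding phi_def gab_def[symmetric] gac_def[symmetric] gbc_def[symmetric] s_def[symmetric] Let_def .
qed

lemma volt2:
  assumes mg: "metrized_graph V E ends L" and V: "V = {a,b}" "a \<noteq> b"
  shows "volt V E ends L b x a = (if x = a then 1 / cnd E ends L a b else 0)"
proof -
  define g where "g = cnd E ends L a b"
  have gp: "g > 0" unfolding g_def by (rule g2_pos[OF mg V])
  have sym: "cnd E ends L b a = g" "cnd E ends L a b = g"
    unfolding g_def by (auto simp: cnd_sym)
  define phi where "phi = (\<lambda>x. if x = a then 1 / g else 0)"
  have fV: "finite V" and fE: "finite E" and eV: "\<forall>e\<in>E. fst (ends e) \<in> V \<and> snd (ends e) \<in> V"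
    using mg unfolding metrized_graph_def by auto
  have P: "is_potential V E ends L a b phi"
    unfolding is_potential_def
  proof
    fix x assume x: "x \<in> V"
    have "(\<Sum>e\<in>E. edge_outflow ends L phi e x) = (\<Sum>y\<in>V-{x}. cnd E ends L x y * (phi x - phi y))"
      by (rule outflow_sum[OF fV fE eV])
    also have "\<dots> = (if x = a then 1 else 0) - (if x = b then 1 else 0)"
    proof -
      consider "x = a" | "x = b" using x V by auto
      then show ?thesis
      proof cases
        case 1
        then have "V - {x} = {b}" using V by auto
        then show ?thesis using 1 V gp by (simp add: sym phi_def)
      next
        case 2
        then have "V - {x} = {a}" using V by auto
        then show ?thesis using 2 V gp by (simp add: sym phi_def)
      qed
    qed
    finally show "(\<Sum>e\<in>E. edge_outflow ends L phi e x) = (if x = a then 1 else 0) - (if x = b then 1 else 0)" .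
  qed
  have "volt V E ends L b x a = phi x"
    by (rule volt_eq[OF mg P]) (use V in \<open>auto simp: phi_def\<close>)
  then show ?thesis unfolding phi_def g_def .
qed

lemma lim_L:
  assumes "l > (0::real)"
  shows "Lim at_top (\<lambda>t::real. l * t\<^sup>2 / (l + t)\<^sup>2) = l"
proof -
  have "((\<lambda>t::real. l / t) \<longlongrightarrow> 0) at_top"
    by (rule tendsto_divide_0[OF tendsto_const filterlim_at_top_imp_at_infinity[OF filterlim_ident]])
  then have "((\<lambda>t::real. l / (1 + l / t)\<^sup>2) \<longlongrightarrow> l / (1 + 0)\<^sup>2) at_top"
    by (intro tendsto_intros) auto
  then have T: "((\<lambda>t::real. l / (1 + l / t)\<^sup>2) \<longlongrightarrow> l) at_top" by simp
  have ev: "\<forall>\<^sub>F t in at_top. l / (1 + l / t)\<^sup>2 = l * t\<^sup>2 / (l + t)\<^sup>2"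
  proof (rule eventually_mono[OF eventually_gt_at_top[of 0]])
    fix t :: real assume "t > 0"
    then show "l / (1 + l / t)\<^sup>2 = l * t\<^sup>2 / (l + t)\<^sup>2" using assms
      by (simp add: field_simps power2_eq_square)
  qed
  have "((\<lambda>t::real. l * t\<^sup>2 / (l + t)\<^sup>2) \<longlongrightarrow> l) at_top"
    using tendsto_cong[OF ev] T by simp
  then show ?thesis by (intro tendsto_Lim) auto
qed

lemma alg_main:
  fixes l x y z D :: real
  assumes "l > 0" "x \<ge> 0" "y \<ge> 0" "z \<ge> 0" "x*y + x*z + y*z > 0"
  shows "l * (D / (x*y + x*z + y*z))\<^sup>2 / (l + (y + z) / (x*y + x*z + y*z))\<^sup>2
       = (1 / l) * D\<^sup>2 / ((x + 1/l)*y + (x + 1/l)*z + y*z)\<^sup>2"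
proof -
  define s where "s = x*y + x*z + y*z"
  have sp: "s > 0" using assms unfolding s_def by simp
  have e: "(x + 1/l)*y + (x + 1/l)*z + y*z = (l*s + (y+z)) / l" using assms unfolding s_def
    by (simp add: field_simps)
  have pos: "l*s + (y+z) > 0" using sp assms by (simp add: add_pos_nonneg)
  show ?thesis unfolding s_def[symmetric] e using sp pos assms
    by (simp add: field_simps power2_eq_square)
qed

lemma bridge_terms:
  assumes "is_bridge V E ends e" "L e > 0"
  shows "y_term1 V E ends L e = L e" "y_term2 V E ends L e p = L e"
proof -
  show "y_term1 V E ends L e = L e" using assms lim_L[of "L e"] unfolding y_term1_def by simp
  have "(\<lambda>t::real. let ra = (if same_side E ends e p then 0 else t);
                 rb = (if same_side E ends e p then t else 0)
             in L e * (ra - rb)\<^sup>2 / (L e + t)\<^sup>2) = (\<lambda>t. L e * t\<^sup>2 / (L e + t)\<^sup>2)"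
    by (rule ext) (simp add: Let_def)
  then show "y_term2 V E ends L e p = L e" using assms lim_L[of "L e"] unfolding y_term2_def by simp
qed

lemma edge3:
  assumes mg: "metrized_graph V E ends L" and V: "V = {a,b,c}" "a \<noteq> b" "a \<noteq> c" "b \<noteq> c"
    and e: "e \<in> E" "ends e = (a,b)" and p: "p \<in> V"
  shows "y_term1 V E ends L e = (1 / L e) * (cnd E ends L a c + cnd E ends L b c)\<^sup>2 /
           (cnd E ends L a b * cnd E ends L a c + cnd E ends L a b * cnd E ends L b c + cnd E ends L a c * cnd E ends L b c)\<^sup>2
       \<and> y_term2 V E ends L e p = (1 / L e) * (if p = c then (cnd E ends L b c - cnd E ends L a c)\<^sup>2 else (cnd E ends L a c + cnd E ends L b c)\<^sup>2) /
           (cnd E ends L a b * cnd E ends L a c + cnd E ends L a b * cnd E ends L b c + cnd E ends L a c * cnd E ends L b c)\<^sup>2"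
proof -
  define E' where "E' = E - {e}"
  define l where "l = L e"
  have fE: "finite E" and Lp: "\<forall>e\<in>E. L e > 0" using mg unfolding metrized_graph_def by auto
  have lp: "l > 0" using Lp e unfolding l_def by auto
  have Lp': "\<forall>e\<in>E'. L e > 0" using Lp unfolding E'_def by auto
  define x where "x = cnd E' ends L a b"
  define y where "y = cnd E' ends L a c"
  define z where "z = cnd E' ends L b c"
  have nn: "x \<ge> 0" "y \<ge> 0" "z \<ge> 0" unfolding x_def y_def z_def by (simp_all add: cnd_nonneg[OF Lp'])
  have hx: "cnd E ends L a b = x + 1/l" unfolding x_def E'_def l_def using cnd_remove[OF fE e(1), of ends L a b] e V by simp
  have hy: "cnd E ends L a c = y" unfolding y_def E'_def using cnd_remove[OF fE e(1), of ends L a c] e V by auto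
  have hz: "cnd E ends L b c = z" unfolding z_def E'_def using cnd_remove[OF fE e(1), of ends L b c] e V by auto
  have sym': "cnd E' ends L b a = x" "cnd E' ends L c a = y" "cnd E' ends L c b = z"
    unfolding x_def y_def z_def by (auto simp: cnd_sym)
  have sig: "(x + 1/l)*y + (x + 1/l)*z + y*z > 0"
    using sig3_pos[OF mg V] unfolding hx hy hz .
  show ?thesis
  proof (cases "is_bridge V E ends e")
    case True
    have nc: "\<not> graph_connected V E' ends" using True unfolding is_bridge_def E'_def by simp
    have c1: "x = 0 \<or> y = 0"
    proof (rule ccontr)
      assume "\<not> (x = 0 \<or> y = 0)"
      then have "graph_connected V E' ends" using V(1)
        by (intro conn3 cnd_pos_adj[where L=L]) (auto simp: x_def y_def)
      then show False using nc by simp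
    qed
    have c2: "x = 0 \<or> z = 0"
    proof (rule ccontr)
      assume "\<not> (x = 0 \<or> z = 0)"
      moreover have "V = {b,a,c}" using V by auto
      ultimately have "graph_connected V E' ends"
        by (intro conn3[of V b a c] cnd_pos_adj[where L=L]) (auto simp: sym' z_def)
      then show False using nc by simp
    qed
    have c3: "y = 0 \<or> z = 0"
    proof (rule ccontr)
      assume "\<not> (y = 0 \<or> z = 0)"
      moreover have "V = {c,a,b}" using V by auto
      ultimately have "graph_connected V E' ends"
        by (intro conn3[of V c a b] cnd_pos_adj[where L=L]) (auto simp: sym' z_def)
      then show False using nc by simp
    qed
    have x0: "x = 0" using c1 c2 sig by auto
    have yz: "y * z = 0" using c3 by auto
    have yzp: "y + z > 0" using sig x0 yz lp by (simp add: field_simps)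
    have sq: "(z - y)\<^sup>2 = (y + z)\<^sup>2" using yz by (simp add: power2_eq_square algebra_simps)
    have val: "(1 / l) * (y + z)\<^sup>2 / ((x + 1/l)*y + (x + 1/l)*z + y*z)\<^sup>2 = l"
    proof -
      have d: "(x + 1/l)*y + (x + 1/l)*z + y*z = (y+z)/l" using x0 yz by (simp add: add_divide_distrib)
      have "(y+z)\<^sup>2 > 0" using yzp by simp
      moreover have "1/l * q / (q / l\<^sup>2) = l" if "q > 0" for q using that lp by (simp add: field_simps power2_eq_square)
      ultimately show ?thesis unfolding d power_divide using lp yzp by (simp add: power2_eq_square)
    qed
    show ?thesis unfolding hx hy hz using bridge_terms(1)[OF True] bridge_terms(2)[OF True, where p=p] lp val sq unfolding l_def
      by (auto simp: add.commute)
  next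
    case False
    have con: "graph_connected V E' ends" using False unfolding is_bridge_def E'_def by simp
    have mg': "metrized_graph V E' ends L" using mg_remove[OF mg] con unfolding E'_def by simp
    have sp: "x*y + x*z + y*z > 0" using sig3_pos[OF mg' V] unfolding x_def y_def z_def .
    have Rv: "R_edge V E ends L e = (y + z) / (x*y + x*z + y*z)"
      using volt3[OF mg' V, where x=a] e unfolding R_edge_def eff_res_def E'_def[symmetric]
      by (simp add: Let_def x_def y_def z_def)
    have V2: "V = {b,a,c}" using V by auto
    have Ra: "R_a V E ends L e p = (if p = b then (y + z) / (x*y + x*z + y*z) else if p = c then z / (x*y + x*z + y*z) else 0)"
      using volt3[OF mg' V2 _ V(4) V(3), where x=p] V e unfolding R_a_def E'_def[symmetric]
      by (simp add: Let_def sym' y_def[symmetric] z_def[symmetric] algebra_simps)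
    have Rb: "R_b V E ends L e p = (if p = a then (y + z) / (x*y + x*z + y*z) else if p = c then y / (x*y + x*z + y*z) else 0)"
      using volt3[OF mg' V, where x=p] V e unfolding R_b_def E'_def[symmetric]
      by (simp add: Let_def x_def y_def z_def)
    define D where "D = (if p = a then - (y + z) else if p = b then y + z else z - y)"
    have RD: "R_a V E ends L e p - R_b V E ends L e p = D / (x*y + x*z + y*z)"
      unfolding Ra Rb D_def using V p by (auto simp: diff_divide_distrib add_divide_distrib)
    have D2: "D\<^sup>2 = (if p = c then (z - y)\<^sup>2 else (y + z)\<^sup>2)"
      unfolding D_def using V p by (auto simp: power2_eq_square algebra_simps)
    have t1: "y_term1 V E ends L e = l * ((y+z) / (x*y + x*z + y*z))\<^sup>2 / (l + (y + z) / (x*y + x*z + y*z))\<^sup>2"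
      using False unfolding y_term1_def Rv l_def by (simp add: Let_def power_divide)
    have t2: "y_term2 V E ends L e p = l * (D / (x*y + x*z + y*z))\<^sup>2 / (l + (y + z) / (x*y + x*z + y*z))\<^sup>2"
      using False unfolding y_term2_def Rv RD l_def by (simp add: Let_def)
    show ?thesis unfolding hx hy hz t1 t2 alg_main[OF lp nn sp] D2 l_def[symmetric]
      by (simp add: add.commute)
  qed
qed

lemma edge2:
  assumes mg: "metrized_graph V E ends L" and V: "V = {a,b}" "a \<noteq> b"
    and e: "e \<in> E" "ends e = (a,b)" and p: "p \<in> V"
  shows "y_term1 V E ends L e = (1 / L e) / (cnd E ends L a b)\<^sup>2
       \<and> y_term2 V E ends L e p = (1 / L e) / (cnd E ends L a b)\<^sup>2"
proof -
  define E' where "E' = E - {e}"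
  define l where "l = L e"
  have fE: "finite E" and Lp: "\<forall>e\<in>E. L e > 0" using mg unfolding metrized_graph_def by auto
  have lp: "l > 0" using Lp e unfolding l_def by auto
  have Lp': "\<forall>e\<in>E'. L e > 0" using Lp unfolding E'_def by auto
  define x where "x = cnd E' ends L a b"
  have nn: "x \<ge> 0" unfolding x_def by (simp add: cnd_nonneg[OF Lp'])
  have hx: "cnd E ends L a b = x + 1/l" unfolding x_def E'_def l_def using cnd_remove[OF fE e(1), of ends L a b] e V by simp
  have sym': "cnd E' ends L b a = x" unfolding x_def by (auto simp: cnd_sym)
  show ?thesis
  proof (cases "is_bridge V E ends e")
    case True
    have nc: "\<not> graph_connected V E' ends" using True unfolding is_bridge_def E'_def by simp
    have x0: "x = 0"
    proof (rule ccontr)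
      assume "x \<noteq> 0"
      then have "graph_connected V E' ends" using V(1)
        by (intro conn2 cnd_pos_adj[where L=L]) (auto simp: x_def)
      then show False using nc by simp
    qed
    have val: "(1 / l) / (x + 1/l)\<^sup>2 = l" using x0 lp by (simp add: field_simps power2_eq_square)
    show ?thesis unfolding hx using bridge_terms(1)[OF True] bridge_terms(2)[OF True, where p=p] lp val unfolding l_def
      by auto
  next
    case False
    have con: "graph_connected V E' ends" using False unfolding is_bridge_def E'_def by simp
    have mg': "metrized_graph V E' ends L" using mg_remove[OF mg] con unfolding E'_def by simp
    have xp: "x > 0" using g2_pos[OF mg' V] unfolding x_def .
    have Rv: "R_edge V E ends L e = 1 / x"
      using volt2[OF mg' V, where x=a] e unfolding R_edge_def eff_res_def E'_def[symmetric]
      by (simp add: x_def)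
    have V2: "V = {b,a}" using V by auto
    have Ra: "R_a V E ends L e p = (if p = b then 1 / x else 0)"
      using volt2[OF mg' V2, where x=p] V e unfolding R_a_def E'_def[symmetric]
      by (simp add: sym')
    have Rb: "R_b V E ends L e p = (if p = a then 1 / x else 0)"
      using volt2[OF mg' V, where x=p] V e unfolding R_b_def E'_def[symmetric]
      by (simp add: x_def)
    have RD: "(R_a V E ends L e p - R_b V E ends L e p)\<^sup>2 = (1/x)\<^sup>2"
      unfolding Ra Rb using V p by (auto simp: power2_eq_square)
    have val: "l * (1/x)\<^sup>2 / (l + 1/x)\<^sup>2 = (1 / l) / (x + 1/l)\<^sup>2"
      using xp lp by (simp add: field_simps power2_eq_square)
    have t1: "y_term1 V E ends L e = l * (1/x)\<^sup>2 / (l + 1/x)\<^sup>2"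
      using False unfolding y_term1_def Rv l_def by (simp add: Let_def power_divide)
    have t2: "y_term2 V E ends L e p = l * (1/x)\<^sup>2 / (l + 1/x)\<^sup>2"
      using False unfolding y_term2_def Rv RD l_def by (simp add: Let_def power_divide)
    show ?thesis unfolding hx t1 t2 val l_def[symmetric] by simp
  qed
qed

lemma loop_terms:
  assumes mg: "metrized_graph V E ends L" and e: "e \<in> E" "ends e = (u,u)"
  shows "y_term1 V E ends L e = 0 \<and> y_term2 V E ends L e p = 0"
proof -
  have con: "graph_connected V (E - {e}) ends" using loop_conn[OF mg e(1)] e by simp
  have nb: "\<not> is_bridge V E ends e" using con unfolding is_bridge_def by simp
  have mg': "metrized_graph V (E - {e}) ends L" by (rule mg_remove[OF mg con])
  have u: "u \<in> V" using mg e unfolding metrized_graph_def by (metis fst_conv)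
  have R: "R_edge V E ends L e = 0" "R_a V E ends L e p = 0" "R_b V E ends L e p = 0"
    unfolding R_edge_def R_a_def R_b_def eff_res_def using e volt_same[OF mg' u] by auto
  show ?thesis using nb unfolding y_term1_def y_term2_def R by (simp add: Let_def)
qed

definition sig3 where
  "sig3 E ends L a b c = cnd E ends L a b * cnd E ends L a c + cnd E ends L a b * cnd E ends L b c + cnd E ends L a c * cnd E ends L b c"

lemma sig3_perm: "sig3 E ends L a b c = sig3 E ends L b a c" "sig3 E ends L a b c = sig3 E ends L a c b"
  unfolding sig3_def by (simp_all add: cnd_sym algebra_simps)

lemma edge3':
  assumes mg: "metrized_graph V E ends L" and V: "V = {a,b,c}" "a \<noteq> b" "a \<noteq> c" "b \<noteq> c"
    and e: "e \<in> E" "ends e = (a,b) \<or> ends e = (b,a)" and p: "p \<in> V"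
  shows "y_term1 V E ends L e = (1 / L e) * ((cnd E ends L b c + cnd E ends L a c)\<^sup>2 / (sig3 E ends L a b c)\<^sup>2)
       \<and> y_term2 V E ends L e p = (1 / L e) * ((if p = c then (cnd E ends L b c - cnd E ends L a c)\<^sup>2 else (cnd E ends L b c + cnd E ends L a c)\<^sup>2) / (sig3 E ends L a b c)\<^sup>2)"
  using e(2)
proof
  assume "ends e = (a,b)"
  from edge3[OF mg V e(1) this p] show ?thesis unfolding sig3_def by (simp add: add.commute)
next
  assume eba: "ends e = (b,a)"
  have Vba: "V = {b,a,c}" using V by auto
  have ba: "b \<noteq> a" using V by auto
  have "y_term1 V E ends L e = (1 / L e) * (cnd E ends L b c + cnd E ends L a c)\<^sup>2 / (sig3 E ends L b a c)\<^sup>2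
       \<and> y_term2 V E ends L e p = (1 / L e) * (if p = c then (cnd E ends L a c - cnd E ends L b c)\<^sup>2 else (cnd E ends L b c + cnd E ends L a c)\<^sup>2) / (sig3 E ends L b a c)\<^sup>2"
    using edge3[OF mg Vba ba V(4) V(3) e(1) eba p] unfolding sig3_def by (simp add: add.commute)
  then show ?thesis using sig3_perm(1)[of E ends L a b c] by (simp add: power2_commute)
qed

lemma sum_pair:
  assumes "finite E" "\<forall>e\<in>{e\<in>E. ends e = (x,y) \<or> ends e = (y,x)}. f e = (1 / L e) * K"
  shows "(\<Sum>e\<in>{e\<in>E. ends e = (x,y) \<or> ends e = (y,x)}. f e) = K * cnd E ends L x y"
  unfolding cnd_def sum_distrib_left using assms by (intro sum.cong) auto

lemma sum_split3:
  assumes "finite E" "\<forall>e\<in>E. fst (ends e) \<in> {a,b,c} \<and> snd (ends e) \<in> {a,b,c}" "a \<noteq> b" "a \<noteq> c" "b \<noteq> c"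
  shows "(\<Sum>e\<in>E. f e) = (\<Sum>e\<in>{e\<in>E. ends e = (a,b) \<or> ends e = (b,a)}. f e) + (\<Sum>e\<in>{e\<in>E. ends e = (a,c) \<or> ends e = (c,a)}. f e)
     + (\<Sum>e\<in>{e\<in>E. ends e = (b,c) \<or> ends e = (c,b)}. f e) + (\<Sum>e\<in>{e\<in>E. fst (ends e) = snd (ends e)}. f e)"
proof -
  have "(\<Sum>e\<in>E. f e) = (\<Sum>e\<in>E. (if ends e = (a,b) \<or> ends e = (b,a) then f e else 0) + (if ends e = (a,c) \<or> ends e = (c,a) then f e else 0)
     + (if ends e = (b,c) \<or> ends e = (c,b) then f e else 0) + (if fst (ends e) = snd (ends e) then f e else 0))"
  proof (rule sum.cong[OF refl])
    fix e assume "e \<in> E"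
    obtain u w where uw0: "ends e = (u,w)" by (cases "ends e")
    have "fst (ends e) \<in> {a,b,c} \<and> snd (ends e) \<in> {a,b,c}" using assms(2) \<open>e \<in> E\<close> by blast
    then have "u = a \<or> u = b \<or> u = c" "w = a \<or> w = b \<or> w = c" using uw0 by simp_all
    then show "f e = (if ends e = (a,b) \<or> ends e = (b,a) then f e else 0) + (if ends e = (a,c) \<or> ends e = (c,a) then f e else 0)
     + (if ends e = (b,c) \<or> ends e = (c,b) then f e else 0) + (if fst (ends e) = snd (ends e) then f e else 0)"
      by (elim disjE) (simp_all add: uw0 assms(3-5) assms(3-5)[THEN not_sym])
  qed
  also have "\<dots> = (\<Sum>e\<in>E. (if ends e = (a,b) \<or> ends e = (b,a) then f e else 0)) + (\<Sum>e\<in>E. (if ends e = (a,c) \<or> ends e = (c,a) then f e else 0))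
     + (\<Sum>e\<in>E. (if ends e = (b,c) \<or> ends e = (c,b) then f e else 0)) + (\<Sum>e\<in>E. (if fst (ends e) = snd (ends e) then f e else 0))"
    by (simp only: sum.distrib)
  finally show ?thesis using assms(1) by (simp only: sum.inter_filter)
qed

lemma sum_split2:
  assumes "finite E" "\<forall>e\<in>E. fst (ends e) \<in> {a,b} \<and> snd (ends e) \<in> {a,b}" "a \<noteq> b"
  shows "(\<Sum>e\<in>E. f e) = (\<Sum>e\<in>{e\<in>E. ends e = (a,b) \<or> ends e = (b,a)}. f e) + (\<Sum>e\<in>{e\<in>E. fst (ends e) = snd (ends e)}. f e)"
proof -
  have "(\<Sum>e\<in>E. f e) = (\<Sum>e\<in>E. (if ends e = (a,b) \<or> ends e = (b,a) then f e else 0) + (if fst (ends e) = snd (ends e) then f e else 0))"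
  proof (rule sum.cong[OF refl])
    fix e assume "e \<in> E"
    obtain u w where uw0: "ends e = (u,w)" by (cases "ends e")
    have "fst (ends e) \<in> {a,b} \<and> snd (ends e) \<in> {a,b}" using assms(2) \<open>e \<in> E\<close> by blast
    then have "u = a \<or> u = b" "w = a \<or> w = b" using uw0 by simp_all
    then show "f e = (if ends e = (a,b) \<or> ends e = (b,a) then f e else 0) + (if fst (ends e) = snd (ends e) then f e else 0)"
      by (elim disjE) (simp_all add: uw0 assms(3) assms(3)[THEN not_sym])
  qed
  also have "\<dots> = (\<Sum>e\<in>E. (if ends e = (a,b) \<or> ends e = (b,a) then f e else 0)) + (\<Sum>e\<in>E. (if fst (ends e) = snd (ends e) then f e else 0))"
    by (simp only: sum.distrib)
  finally show ?thesis using assms(1) by (simp only: sum.inter_filter)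
qed

lemma sum_loops:
  assumes "metrized_graph V E ends L"
  shows "(\<Sum>e\<in>{e\<in>E. fst (ends e) = snd (ends e)}. y_term1 V E ends L e) = 0"
    "(\<Sum>e\<in>{e\<in>E. fst (ends e) = snd (ends e)}. y_term2 V E ends L e p) = 0"
proof -
  have "\<And>e. e \<in> {e\<in>E. fst (ends e) = snd (ends e)} \<Longrightarrow> y_term1 V E ends L e = 0 \<and> y_term2 V E ends L e p = 0"
  proof -
    fix e assume "e \<in> {e\<in>E. fst (ends e) = snd (ends e)}"
    then have "e \<in> E" "ends e = (fst (ends e), fst (ends e))" by (auto simp: prod_eq_iff)
    then show "y_term1 V E ends L e = 0 \<and> y_term2 V E ends L e p = 0" by (rule loop_terms[OF assms])
  qed
  then show "(\<Sum>e\<in>{e\<in>E. fst (ends e) = snd (ends e)}. y_term1 V E ends L e) = 0"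
    "(\<Sum>e\<in>{e\<in>E. fst (ends e) = snd (ends e)}. y_term2 V E ends L e p) = 0" by auto
qed



lemma eff_res2:
  assumes mg: "metrized_graph V E ends L" and V: "V = {a,b}" "a \<noteq> b"
  shows "eff_res V E ends L a b = 1 / cnd E ends L a b"
  using volt2[OF mg V, where x=a] unfolding eff_res_def by simp

lemma eff_res3:
  assumes mg: "metrized_graph V E ends L" and V: "V = {a,b,c}" "a \<noteq> b" "a \<noteq> c" "b \<noteq> c"
  shows "eff_res V E ends L a b = (cnd E ends L a c + cnd E ends L b c) / sig3 E ends L a b c"
  using volt3[OF mg V, where x=a] unfolding eff_res_def sig3_def by (simp add: Let_def)

lemma eff_res_self:
  assumes mg: "metrized_graph V E ends L" and "a \<in> V"
  shows "eff_res V E ends L a a = 0"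
  using volt_same[OF assms] unfolding eff_res_def by simp

lemma case2:
  assumes mg: "metrized_graph V E ends L" and V: "V = {a,b}" "a \<noteq> b" and p: "p \<in> V"
  shows "kirchhoff_index V E ends L = y_inv V E ends L p"
proof -
  define g where "g = cnd E ends L a b"
  have gp: "g > 0" unfolding g_def by (rule g2_pos[OF mg V])
  have fE: "finite E" and eV: "\<forall>e\<in>E. fst (ends e) \<in> {a,b} \<and> snd (ends e) \<in> {a,b}"
    using mg V unfolding metrized_graph_def by auto
  have V': "V = {b,a}" "b \<noteq> a" using V by auto
  have r1: "eff_res V E ends L a b = 1 / g" unfolding g_def by (rule eff_res2[OF mg V])
  have r2: "eff_res V E ends L b a = 1 / g" unfolding g_def using eff_res2[OF mg V'] by (simp add: cnd_sym)
  have r0: "eff_res V E ends L a a = 0" "eff_res V E ends L b b = 0" using eff_res_self[OF mg] V by auto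
  have Kf: "kirchhoff_index V E ends L = 1 / g"
    unfolding kirchhoff_index_def using V r1 r2 r0 by simp
  have T: "y_term1 V E ends L e = (1 / L e) * (1 / g\<^sup>2) \<and> y_term2 V E ends L e p = (1 / L e) * (1 / g\<^sup>2)"
    if e: "e \<in> {e\<in>E. ends e = (a,b) \<or> ends e = (b,a)}" for e
  proof -
    from e have "e \<in> E" "ends e = (a,b) \<or> ends e = (b,a)" by auto
    from this(2) show ?thesis
    proof
      assume "ends e = (a,b)"
      from edge2[OF mg V \<open>e \<in> E\<close> this p] show ?thesis unfolding g_def by simp
    next
      assume "ends e = (b,a)"
      from edge2[OF mg V' \<open>e \<in> E\<close> this p] show ?thesis unfolding g_def by (simp add: cnd_sym)
    qed
  qed
  have S1: "(\<Sum>e\<in>E. y_term1 V E ends L e) = (1 / g\<^sup>2) * g"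
    unfolding sum_split2[OF fE eV V(2)] sum_loops[OF mg] g_def add_0_right
    by (rule sum_pair[OF fE]) (use T g_def in auto)
  have S2: "(\<Sum>e\<in>E. y_term2 V E ends L e p) = (1 / g\<^sup>2) * g"
    unfolding sum_split2[OF fE eV V(2)] sum_loops[OF mg] g_def add_0_right
    by (rule sum_pair[OF fE]) (use T g_def in auto)
  show ?thesis unfolding Kf y_inv_def S1 S2 using gp by (simp add: field_simps power2_eq_square)
qed

lemma case3:
  assumes mg: "metrized_graph V E ends L" and V: "V = {a,b,c}" "a \<noteq> b" "a \<noteq> c" "b \<noteq> c"
  shows "kirchhoff_index V E ends L = 2 * y_inv V E ends L a"
proof -
  define A where "A = cnd E ends L b c"
  define B where "B = cnd E ends L a c"
  define C where "C = cnd E ends L a b"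
  define \<sigma> where "\<sigma> = sig3 E ends L a b c"
  have sp: "\<sigma> > 0" using sig3_pos[OF mg V] unfolding \<sigma>_def sig3_def .
  have sdef: "\<sigma> = C * B + C * A + B * A" unfolding \<sigma>_def sig3_def A_def B_def C_def ..
  have cs: "cnd E ends L c b = A" "cnd E ends L c a = B" "cnd E ends L b a = C"
    "cnd E ends L b c = A" "cnd E ends L a c = B" "cnd E ends L a b = C"
    unfolding A_def B_def C_def by (simp_all add: cnd_sym)
  have ss: "sig3 E ends L b a c = \<sigma>" "sig3 E ends L a c b = \<sigma>" "sig3 E ends L c a b = \<sigma>"
    "sig3 E ends L b c a = \<sigma>" "sig3 E ends L c b a = \<sigma>" "sig3 E ends L a b c = \<sigma>"
    unfolding \<sigma>_def sig3_def by (simp_all add: cnd_sym algebra_simps)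
  have fE: "finite E" and eV: "\<forall>e\<in>E. fst (ends e) \<in> {a,b,c} \<and> snd (ends e) \<in> {a,b,c}"
    using mg V unfolding metrized_graph_def by auto
  have V1: "V = {b,a,c}" "V = {a,c,b}" "V = {c,a,b}" "V = {b,c,a}" "V = {c,b,a}" using V by auto
  have nq: "b \<noteq> a" "c \<noteq> a" "c \<noteq> b" using V by auto
  have r: "eff_res V E ends L a b = (B + A) / \<sigma>" "eff_res V E ends L b a = (A + B) / \<sigma>"
    "eff_res V E ends L a c = (C + A) / \<sigma>" "eff_res V E ends L c a = (A + C) / \<sigma>"
    "eff_res V E ends L b c = (C + B) / \<sigma>" "eff_res V E ends L c b = (B + C) / \<sigma>"
    using eff_res3[OF mg V] eff_res3[OF mg V1(1) nq(1) V(4) V(3)] eff_res3[OF mg V1(2) V(3) V(2) nq(3)]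
      eff_res3[OF mg V1(3) nq(2) nq(3) V(2)] eff_res3[OF mg V1(4) V(4) nq(1) nq(2)]
      eff_res3[OF mg V1(5) nq(3) nq(2) nq(1)]
    by (simp_all add: cs ss)
  have r0: "eff_res V E ends L a a = 0" "eff_res V E ends L b b = 0" "eff_res V E ends L c c = 0"
    using eff_res_self[OF mg] V by auto
  have Kf: "kirchhoff_index V E ends L = 2 * (A + B + C) / \<sigma>"
    unfolding kirchhoff_index_def using V r r0 sp by (simp add: field_simps)
  have pa: "a \<in> V" using V by simp
  have T1: "y_term1 V E ends L e = (1 / L e) * ((A + B)\<^sup>2 / \<sigma>\<^sup>2) \<and> y_term2 V E ends L e a = (1 / L e) * ((A + B)\<^sup>2 / \<sigma>\<^sup>2)"
    if e: "e \<in> {e\<in>E. ends e = (a,b) \<or> ends e = (b,a)}" for e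
    using edge3'[OF mg V _ _ pa, where e=e] e V by (simp add: cs ss)
  have T2: "y_term1 V E ends L e = (1 / L e) * ((A + C)\<^sup>2 / \<sigma>\<^sup>2) \<and> y_term2 V E ends L e a = (1 / L e) * ((A + C)\<^sup>2 / \<sigma>\<^sup>2)"
    if e: "e \<in> {e\<in>E. ends e = (a,c) \<or> ends e = (c,a)}" for e
    using edge3'[OF mg V1(2) V(3) V(2) nq(3) _ _ pa, where e=e] e V by (simp add: cs ss)
  have T3: "y_term1 V E ends L e = (1 / L e) * ((B + C)\<^sup>2 / \<sigma>\<^sup>2) \<and> y_term2 V E ends L e a = (1 / L e) * ((B - C)\<^sup>2 / \<sigma>\<^sup>2)"
    if e: "e \<in> {e\<in>E. ends e = (b,c) \<or> ends e = (c,b)}" for e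
    using edge3'[OF mg V1(4) V(4) nq(1) nq(2) _ _ pa, where e=e] e V by (simp add: cs ss)
  have S1: "(\<Sum>e\<in>E. y_term1 V E ends L e) = ((A + B)\<^sup>2 / \<sigma>\<^sup>2) * C + ((A + C)\<^sup>2 / \<sigma>\<^sup>2) * B + ((B + C)\<^sup>2 / \<sigma>\<^sup>2) * A"
    unfolding sum_split3[OF fE eV V(2-4)] sum_loops[OF mg] add_0_right C_def B_def A_def
    by (intro arg_cong2[where f="(+)"] sum_pair[OF fE]) (use T1 T2 T3 A_def B_def C_def in auto)
  have S2: "(\<Sum>e\<in>E. y_term2 V E ends L e a) = ((A + B)\<^sup>2 / \<sigma>\<^sup>2) * C + ((A + C)\<^sup>2 / \<sigma>\<^sup>2) * B + ((B - C)\<^sup>2 / \<sigma>\<^sup>2) * A"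
    unfolding sum_split3[OF fE eV V(2-4)] sum_loops[OF mg] add_0_right C_def B_def A_def
    by (intro arg_cong2[where f="(+)"] sum_pair[OF fE]) (use T1 T2 T3 A_def B_def C_def in auto)
  have "2 * (A + B + C) / \<sigma> = 2 * ((1/4) * (((A + B)\<^sup>2 / \<sigma>\<^sup>2) * C + ((A + C)\<^sup>2 / \<sigma>\<^sup>2) * B + ((B + C)\<^sup>2 / \<sigma>\<^sup>2) * A)
      + (3/4) * (((A + B)\<^sup>2 / \<sigma>\<^sup>2) * C + ((A + C)\<^sup>2 / \<sigma>\<^sup>2) * B + ((B - C)\<^sup>2 / \<sigma>\<^sup>2) * A))"
  proof -
    define N1 where "N1 = (A + B)\<^sup>2 * C + (A + C)\<^sup>2 * B + (B + C)\<^sup>2 * A"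
    define N2 where "N2 = (A + B)\<^sup>2 * C + (A + C)\<^sup>2 * B + (B - C)\<^sup>2 * A"
    have key: "N1 + 3 * N2 = 4 * ((A + B + C) * \<sigma>)"
      unfolding N1_def N2_def sdef power2_eq_square by algebra
    have r1: "((A + B)\<^sup>2 / \<sigma>\<^sup>2) * C + ((A + C)\<^sup>2 / \<sigma>\<^sup>2) * B + ((B + C)\<^sup>2 / \<sigma>\<^sup>2) * A = N1 / \<sigma>\<^sup>2"
      unfolding N1_def by (simp add: add_divide_distrib)
    have r2: "((A + B)\<^sup>2 / \<sigma>\<^sup>2) * C + ((A + C)\<^sup>2 / \<sigma>\<^sup>2) * B + ((B - C)\<^sup>2 / \<sigma>\<^sup>2) * A = N2 / \<sigma>\<^sup>2"
      unfolding N2_def by (simp add: add_divide_distrib)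
    have "2 * ((1/4) * (N1 / \<sigma>\<^sup>2) + (3/4) * (N2 / \<sigma>\<^sup>2)) = (N1 + 3 * N2) / (2 * \<sigma>\<^sup>2)"
      using sp by (simp add: field_simps)
    also have "\<dots> = 2 * (A + B + C) / \<sigma>" unfolding key using sp by (simp add: power2_eq_square field_simps)
    finally show ?thesis unfolding r1 r2 by simp
  qed
  then show ?thesis unfolding Kf y_inv_def S1 S2 .
qed

theorem corollary3p10:
  fixes V :: "'v set" and E :: "'e set" and ends :: "'e \<Rightarrow> 'v \<times> 'v" and L :: "'e \<Rightarrow> real"
    and p :: 'v
  assumes "metrized_graph V E ends L" and "p \<in> V"
  shows "(card V = 2 \<longrightarrow> kirchhoff_index V E ends L = y_inv V E ends L p) \<and>
         (card V = 3 \<longrightarrow> kirchhoff_index V E ends L = 2 * y_inv V E ends L p)"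
proof (intro conjI impI)
  assume "card V = 2"
  then obtain a b where "V = {a,b}" "a \<noteq> b" by (auto simp: card_2_iff)
  then show "kirchhoff_index V E ends L = y_inv V E ends L p" using case2[OF assms(1) _ _ assms(2)] by simp
next
  assume "card V = 3"
  then obtain x y z where V: "V = {x,y,z}" "x \<noteq> y" "y \<noteq> z" "x \<noteq> z" by (auto simp: card_3_iff)
  have "\<exists>b c. V = {p,b,c} \<and> p \<noteq> b \<and> p \<noteq> c \<and> b \<noteq> c"
  proof -
    consider "p = x" | "p = y" | "p = z" using assms(2) V by auto
    then show ?thesis
    proof cases
      case 1 then show ?thesis using V by blast
    next
      case 2 then show ?thesis using V by (intro exI[of _ x] exI[of _ z]) auto
    next
      case 3 then show ?thesis using V by (intro exI[of _ x] exI[of _ y]) auto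
    qed
  qed
  then obtain b c where "V = {p,b,c}" "p \<noteq> b" "p \<noteq> c" "b \<noteq> c" by blast
  then show "kirchhoff_index V E ends L = 2 * y_inv V E ends L p" by (rule case3[OF assms(1)])
qed

end
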